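(* Let $\beta_{\mathtt{H}},\beta_{\mathtt{L}},\gamma_{\mathtt{H}},\gamma_{\mathtt{L}}>0$ with $\beta_{\mathtt{H}}/\gamma_{\mathtt{H}}>\beta_{\mathtt{L}}/\gamma_{\mathtt{L}}$ and $\beta_{\mathtt{H}}>\beta_{\mathtt{L}}$, let $q_{\mathtt{HL}},q_{\mathtt{LH}}\ge 0$, $\alpha\in(0,1)$, fix $z_{\mathtt{S}}\in[0,1]$, and set $\hat\beta_{\mathtt{Q}}:=\beta_{\mathtt{Q}}(\alpha z_{\mathtt{S}}+1-z_{\mathtt{S}})$ for $\mathtt{Q}\in\{\mathtt{H},\mathtt{L}\}$. Consider the dynamics \begin{align*} \dot{\mathtt{I}}_{\mathtt{H}}&=\hat\beta_{\mathtt{H}}\mathtt{I}_{\mathtt{H}}(1-\mathtt{I}_{\mathtt{H}}-\mathtt{I}_{\mathtt{L}})+q_{\mathtt{LH}}\mathtt{I}_{\mathtt{L}}-(q_{\mathtt{HL}}+\gamma_{\mathtt{H}})\mathtt{I}_{\mathtt{H}},\\ \dot{\mathtt{I}}_{\mathtt{L}}&=\hat\beta_{\mathtt{L}}\mathtt{I}_{\mathtt{L}}(1-\mathtt{I}_{\mathtt{H}}-\mathtt{I}_{\mathtt{L}})+q_{\mathtt{HL}}\mathtt{I}_{\mathtt{H}}-(q_{\mathtt{LH}}+\gamma_{\mathtt{L}})\mathtt{I}_{\mathtt{L}}. \end{align*} If $(\mathtt{I}^\star_{\mathtt{H}},\mathtt{I}^\star_{\mathtt{L}})\in(0,1)^2$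 is an equilibrium of this system (an endemic equilibrium), then it is locally stable.
   Context: Bi-virus SIS model with strains $\mathtt{H},\mathtt{L}$: $\mathtt{I}_{\mathtt{H}},\mathtt{I}_{\mathtt{L}}$ are infected fractions, $1-\mathtt{I}_{\mathtt{H}}-\mathtt{I}_{\mathtt{L}}$ the susceptible fraction, $\beta$'s transmission rates, $\gamma$'s recovery rates, $q_{\mathtt{HL}},q_{\mathtt{LH}}$ mutation rates, $z_{\mathtt{S}}$ fraction of susceptibles protected, protection scaling infection rates by $\alpha$. *)

theory Defs
  imports "HOL-Analysis.Analysis"
begin

definition bivirus_field ::
  "real \<Rightarrow> real \<Rightarrow> real \<Rightarrow> real \<Rightarrow> real \<Rightarrow> real \<Rightarrow> real \<Rightarrow> real \<Rightarrow> real \<times> real \<Rightarrow> real \<times> real" where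
  "bivirus_field bH bL gH gL qHL qLH \<alpha> zS = (\<lambda>(iH, iL).
     let bH' = bH * (\<alpha> * zS + 1 - zS); bL' = bL * (\<alpha> * zS + 1 - zS) in
     (bH' * iH * (1 - iH - iL) + qLH * iL - (qHL + gH) * iH,
      bL' * iL * (1 - iH - iL) + qHL * iH - (qLH + gL) * iL))"

definition locally_stable :: "('a::real_normed_vector \<Rightarrow> 'a) \<Rightarrow> 'a \<Rightarrow> bool" where
  "locally_stable F xs \<longleftrightarrow>
     (\<forall>\<epsilon>>0. \<exists>\<delta>>0. \<forall>(x :: real \<Rightarrow> 'a) (T :: real).
        (\<forall>t\<in>{0..T}. (x has_vector_derivative F (x t)) (at t within {0..T})) \<and>
        dist (x 0) xs < \<delta> \<longrightarrow> (\<forall>t\<in>{0..T}. dist (x t) xs < \<epsilon>))"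

end

theory Submission
  imports Defs
begin

lemma quad_lyap_stable:
  fixes F :: "real \<times> real \<Rightarrow> real \<times> real" and h l p q r R0 :: real
  assumes pp: "p > 0" and dp: "p*r - q^2 > 0" and r0: "R0 > 0"
  and decr: "\<And>u v. u^2+v^2 < R0^2 \<Longrightarrow>
     2*(p*u+q* v)*fst(F(h+u,l+v)) + 2*(q*u+r* v)* snd(F(h+u,l+v)) \<le> 0"
  shows "locally_stable F (h,l)"
  unfolding locally_stable_def
proof (intro allI impI)
  fix \<epsilon> :: real assume e0: "\<epsilon> > 0"
  have rp: "r > 0"
  proof (rule ccontr)
    assume "\<not> r > 0" then have "p*r \<le> 0" using pp by (simp add: mult_nonneg_nonpos not_less)
    then show False using dp by (smt (verit) zero_le_power2)
  qed
  define V where "V = (\<lambda>y::real\<times>real. p*(fst y - h)^2 + 2*q*(fst y - h)*(snd y - l) + r*(snd y - l)^2)"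
  define lam where "lam = (p*r - q^2)/(p+r)"
  define Lam where "Lam = p + \<bar>q\<bar> + r"
  have lam0: "lam > 0" unfolding lam_def using dp pp rp by simp
  have Lam0: "Lam > 0" unfolding Lam_def using pp rp by simp
  have dsq: "(dist y (h,l))^2 = (fst y - h)^2 + (snd y - l)^2" for y :: "real\<times>real"
    by (cases y) (simp add: dist_Pair_Pair dist_real_def)
  have Vlow: "lam * (dist y (h,l))^2 \<le> V y" for y
  proof -
    define u where "u = fst y - h"
    define v where "v = snd y - l"
    have "(p+r) * V y = (p*u+q* v)^2 + (q*u+r* v)^2 + (p*r-q^2)*(u^2+v^2)"
      unfolding V_def u_def v_def by (simp add: power2_eq_square algebra_simps)
    then have "(p*r-q^2)*(u^2+v^2) \<le> (p+r) * V y" by simp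
    then have "lam * (u^2+v^2) \<le> V y" unfolding lam_def using pp rp
      by (simp add: field_simps)
    then show ?thesis using dsq u_def v_def by simp
  qed
  have Vup: "V y \<le> Lam * (dist y (h,l))^2" for y
  proof -
    define u where "u = fst y - h"
    define v where "v = snd y - l"
    have a: "2*\<bar>u* v\<bar> \<le> u^2+v^2"
    proof -
      have "0 \<le> (\<bar>u\<bar> - \<bar>v\<bar>)^2" by simp
      then show ?thesis by (simp add: power2_eq_square abs_mult algebra_simps)
    qed
    have "2*q*u* v \<le> \<bar>q\<bar> * (2*\<bar>u* v\<bar>)" using abs_ge_self[of "2*q*u* v"] by (simp add: abs_mult mult.assoc)
    also have "\<dots> \<le> \<bar>q\<bar> * (u^2+v^2)" using a by (simp add: mult_left_mono)
    finally have b: "2*q*u* v \<le> \<bar>q\<bar> * (u^2+v^2)" .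
    have c: "p*u^2 \<le> p*(u^2+v^2)" "r* v^2 \<le> r*(u^2+v^2)" using pp rp by simp_all
    have "V y = p*u^2 + 2*q*u* v + r* v^2" unfolding V_def u_def v_def by simp
    also have "\<dots> \<le> Lam * (u^2+v^2)" using b c unfolding Lam_def by (simp add: algebra_simps)
    finally show ?thesis using dsq u_def v_def by simp
  qed
  define \<rho> where "\<rho> = min \<epsilon> R0"
  have rho0: "\<rho> > 0" using e0 r0 unfolding \<rho>_def by simp
  define \<delta> where "\<delta> = min \<rho> (\<rho> * sqrt (lam/Lam))"
  have d0: "\<delta> > 0" unfolding \<delta>_def using rho0 lam0 Lam0 by simp
  have dsq2: "Lam * \<delta>^2 \<le> lam * \<rho>^2"
  proof -
    have "\<delta>^2 \<le> (\<rho> * sqrt (lam/Lam))^2" unfolding \<delta>_def using d0 \<delta>_def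
      by (intro power_mono) auto
    also have "\<dots> = \<rho>^2 * (lam/Lam)" using lam0 Lam0 by (simp add: power_mult_distrib)
    finally show ?thesis using Lam0 by (simp add: field_simps)
  qed
  show "\<exists>\<delta>>0. \<forall>x T. (\<forall>t\<in>{0..T}. (x has_vector_derivative F (x t)) (at t within {0..T})) \<and>
        dist (x 0) (h,l) < \<delta> \<longrightarrow> (\<forall>t\<in>{0..T}. dist (x t) (h,l) < \<epsilon>)"
  proof (intro exI[of _ \<delta>] conjI allI impI d0)
    fix x :: "real \<Rightarrow> real \<times> real" and T :: real
    assume H: "(\<forall>t\<in>{0..T}. (x has_vector_derivative F (x t)) (at t within {0..T})) \<and>
        dist (x 0) (h,l) < \<delta>"
    then have hx: "\<And>t. t \<in> {0..T} \<Longrightarrow> (x has_vector_derivative F (x t)) (at t within {0..T})"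
      and x0: "dist (x 0) (h,l) < \<delta>" by auto
    have cont: "continuous_on {0..T} x"
      using hx has_vector_derivative_continuous continuous_on_eq_continuous_within by blast
    show "\<forall>t\<in>{0..T}. dist (x t) (h,l) < \<epsilon>"
    proof (rule ccontr)
      assume "\<not> ?thesis"
      then obtain t0 where t0: "t0 \<in> {0..T}" "\<epsilon> \<le> dist (x t0) (h,l)" by force
      define S where "S = {0..T} \<inter> (\<lambda>t. dist (x t) (h,l)) -` {\<rho>..}"
      have contd: "continuous_on {0..T} (\<lambda>t. dist (x t) (h,l))"
        by (intro continuous_intros cont)
      have clS: "closed S" unfolding S_def
        by (rule continuous_closed_preimage[OF contd]) auto
      have t0S: "t0 \<in> S" using t0 unfolding S_def \<rho>_def by auto
      have bS: "bdd_below S" unfolding S_def by (auto intro: bdd_belowI[of _ 0])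
      define t1 where "t1 = Inf S"
      have t1S: "t1 \<in> S" unfolding t1_def using closed_contains_Inf[OF _ bS clS] t0S by blast
      have t1le: "t1 \<le> t" if "t \<in> S" for t unfolding t1_def using cInf_lower[OF that bS] .
      have t1T: "0 \<le> t1" "t1 \<le> T" using t1S unfolding S_def by auto
      have "t1 \<noteq> 0"
      proof
        assume "t1 = 0"
        then have "\<rho> \<le> dist (x 0) (h,l)" using t1S unfolding S_def by auto
        then show False using x0 unfolding \<delta>_def by simp
      qed
      then have t1p: "t1 > 0" using t1T by simp
      have small: "dist (x t) (h,l) < \<rho>" if "0 \<le> t" "t < t1" for t
      proof (rule ccontr)
        assume "\<not> ?thesis"
        then have "t \<in> S" unfolding S_def using that t1T by auto
        then show False using t1le that by fastforce
      qed
      define G where "G = (\<lambda>t. 2*(p*(fst (x t) - h)+q*(snd (x t) - l))*fst(F(x t))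
           + 2*(q*(fst (x t) - h)+r*(snd (x t) - l))* snd(F(x t)))"
      have gder: "((\<lambda>t. V (x t)) has_real_derivative G t) (at t within {0..T})" if "t \<in> {0..T}" for t
      proof -
        have hv: "(x has_derivative (\<lambda>s. s *\<^sub>R F (x t))) (at t within {0..T})"
          using hx[OF that] by (simp add: has_vector_derivative_def)
        have f1: "((\<lambda>s. fst (x s)) has_real_derivative fst (F (x t))) (at t within {0..T})"
          using has_derivative_fst[OF hv] by (simp add: has_field_derivative_def mult_commute_abs)
        have f2: "((\<lambda>s. snd (x s)) has_real_derivative snd (F (x t))) (at t within {0..T})"
          using has_derivative_snd[OF hv] by (simp add: has_field_derivative_def mult_commute_abs)
        show ?thesis unfolding V_def G_def
          by (auto intro!: derivative_eq_intros f1 f2 simp: power2_eq_square algebra_simps)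
      qed
      have Gneg: "G t \<le> 0" if "0 \<le> t" "t < t1" for t
      proof -
        define u where "u = fst (x t) - h"
        define v where "v = snd (x t) - l"
        have xt: "x t = (h+u, l+v)" unfolding u_def v_def by simp
        have "(dist (x t) (h,l))^2 < \<rho>^2" using small[OF that]
          by (intro power_strict_mono) auto
        then have "u^2+v^2 < \<rho>^2" using dsq[of "x t"] u_def v_def by simp
        also have "\<rho>^2 \<le> R0^2" unfolding \<rho>_def using rho0 \<rho>_def by (intro power_mono) auto
        finally have "u^2+v^2 < R0^2" .
        from decr[OF this] show ?thesis unfolding G_def u_def[symmetric] v_def[symmetric] xt by simp
      qed
      have "\<exists>\<xi>\<in>{0<..<t1}. V (x t1) - V (x 0) = (\<lambda>s. G \<xi> * s) (t1 - 0)"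
      proof (rule mvt_simple[OF t1p])
        fix s assume "0 \<le> s" "s \<le> t1"
        then have "((\<lambda>t. V (x t)) has_real_derivative G s) (at s within {0..T})"
          using gder t1T by auto
        then have "((\<lambda>t. V (x t)) has_real_derivative G s) (at s within {0..t1})"
          by (rule has_field_derivative_subset) (use t1T in auto)
        then show "((\<lambda>t. V (x t)) has_derivative (\<lambda>s'. G s * s')) (at s within {0..t1})"
          by (simp add: has_field_derivative_def)
      qed
      then obtain \<xi> where \<xi>: "\<xi> \<in> {0<..<t1}" and eq: "V (x t1) - V (x 0) = G \<xi> * t1" by auto
      have "G \<xi> \<le> 0" using Gneg \<xi> by auto
      then have "G \<xi> * t1 \<le> 0" using t1p by (simp add: mult_nonpos_nonneg)
      then have A: "V (x t1) \<le> V (x 0)" using eq by simp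
      have "V (x 0) \<le> Lam * (dist (x 0) (h,l))^2" by (rule Vup)
      also have "\<dots> < Lam * \<delta>^2" using x0 Lam0
        by (intro mult_strict_left_mono power_strict_mono) auto
      also have "\<dots> \<le> lam * \<rho>^2" by (rule dsq2)
      also have "\<dots> \<le> lam * (dist (x t1) (h,l))^2" using t1S lam0 rho0 unfolding S_def
        by (intro mult_left_mono power_mono) auto
      also have "\<dots> \<le> V (x t1)" by (rule Vlow)
      finally show False using A by simp
    qed
  qed
qed

lemma quad_pos:
  fixes a11 a12 a21 a22 :: real
  assumes D: "a11 * a22 - a12 * a21 > 0"
  shows "a11 * a22 - a12 * a21 + a21^2 + a22^2 > 0"
    and "(a11 * a22 - a12 * a21 + a21^2 + a22^2)  *  (a11 * a22 - a12 * a21 + a11^2 + a12^2)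
          - (-(a11 * a21 + a12 * a22))^2 > 0"
proof -
  define D where "D = a11 * a22 - a12 * a21"
  have D0: "D > 0" using D D_def by simp
  show "a11 * a22 - a12 * a21 + a21^2 + a22^2 > 0" using D0 D_def
    by (simp add: add_pos_nonneg)
  have "(a11 * a22 - a12 * a21 + a21^2 + a22^2)  *  (a11 * a22 - a12 * a21 + a11^2 + a12^2)
          - (-(a11 * a21 + a12 * a22))^2 = D^2 + D * (a11^2+a12^2+a21^2+a22^2) + D^2"
    unfolding D_def by (simp add: power2_eq_square algebra_simps)
  also have "\<dots> > 0" using D0 by (intro add_pos_pos add_pos_nonneg) auto
  finally show "(a11 * a22 - a12 * a21 + a21^2 + a22^2)  *  (a11 * a22 - a12 * a21 + a11^2 + a12^2)
          - (-(a11 * a21 + a12 * a22))^2 > 0" .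
qed

lemma quad_decr:
  fixes a11 a12 a21 a22 b c u v p q r G R0 :: real
  assumes D: "a11 * a22 - a12 * a21 > 0" and tr: "a11 + a22 < 0" and b: "b \<ge> 0" and c: "c \<ge> 0"
  and pdef: "p = a11 * a22 - a12 * a21 + a21^2 + a22^2"
  and qdef: "q = -(a11 * a21 + a12 * a22)"
  and rdef: "r = a11 * a22 - a12 * a21 + a11^2 + a12^2"
  and Gdef: "G = b * (\<bar>p\<bar>+\<bar>q\<bar>) + c * (\<bar>q\<bar>+\<bar>r\<bar>)"
  and R0def: "R0 = -(a11+a22) * (a11 * a22 - a12 * a21)/(2 * G+1)"
  and uv: "u^2+v^2 < R0^2"
  shows "2 * (p * u+q *  v) * (a11 * u + a12 *  v - b * u * (u+v)) + 2 * (q * u+r *  v) * (a21 * u + a22 *  v - c *  v * (u+v)) \<le> 0"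
proof -
  define D where "D = a11 * a22 - a12 * a21"
  define N where "N = u^2+v^2"
  define K where "K = -(a11+a22) * D"
  have K0: "K > 0" unfolding K_def D_def using D tr by (simp add: mult_pos_pos)
  have G0: "G \<ge> 0" unfolding Gdef using b c by simp
  have R0pos: "R0 > 0" unfolding R0def using K0 G0 unfolding K_def D_def by simp
  have lin: "2 * (p * u+q *  v) * (a11 * u + a12 *  v) + 2 * (q * u+r *  v) * (a21 * u + a22 *  v) = -2 * K * N"
    unfolding pdef qdef rdef K_def D_def N_def by (simp add: power2_eq_square algebra_simps)
  define R where "R = -(2 * (u+v) * (b * u * (p * u+q *  v) + c *  v * (q * u+r *  v)))"
  have split: "2 * (p * u+q *  v) * (a11 * u + a12 *  v - b * u * (u+v)) + 2 * (q * u+r *  v) * (a21 * u + a22 *  v - c *  v * (u+v))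
     = -2 * K * N + R" unfolding R_def using lin by (simp add: algebra_simps)
  have uvN: "\<bar>u\<bar> * \<bar>v\<bar> \<le> N" unfolding N_def
  proof -
    have "0 \<le> (\<bar>u\<bar> - \<bar>v\<bar>)^2" by simp
    then have "2 * (\<bar>u\<bar> * \<bar>v\<bar>) \<le> u^2+v^2" by (simp add: power2_eq_square abs_mult algebra_simps)
    moreover have "0 \<le> \<bar>u\<bar> * \<bar>v\<bar>" by simp
    ultimately show "\<bar>u\<bar> * \<bar>v\<bar> \<le> u^2+v^2" by linarith
  qed
  have uN: "\<bar>u\<bar> * \<bar>u\<bar> \<le> N" "\<bar>v\<bar> * \<bar>v\<bar> \<le> N" unfolding N_def
    by (simp_all add: abs_mult_self_eq power2_eq_square)
  have t1: "\<bar>u * (p * u+q *  v)\<bar> \<le> (\<bar>p\<bar>+\<bar>q\<bar>) * N"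
  proof -
    have "\<bar>u * (p * u+q *  v)\<bar> \<le> \<bar>p\<bar> * (\<bar>u\<bar> * \<bar>u\<bar>) + \<bar>q\<bar> * (\<bar>u\<bar> * \<bar>v\<bar>)"
      by (simp add: abs_mult distrib_left abs_triangle_ineq[THEN order_trans] algebra_simps)
    also have "\<dots> \<le> \<bar>p\<bar> * N + \<bar>q\<bar> * N" using uN uvN by (intro add_mono mult_left_mono) auto
    finally show ?thesis by (simp add: algebra_simps)
  qed
  have t2: "\<bar>v * (q * u+r *  v)\<bar> \<le> (\<bar>q\<bar>+\<bar>r\<bar>) * N"
  proof -
    have "\<bar>v * (q * u+r *  v)\<bar> \<le> \<bar>q\<bar> * (\<bar>u\<bar> * \<bar>v\<bar>) + \<bar>r\<bar> * (\<bar>v\<bar> * \<bar>v\<bar>)"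
      by (simp add: abs_mult distrib_left abs_triangle_ineq[THEN order_trans] algebra_simps)
    also have "\<dots> \<le> \<bar>q\<bar> * N + \<bar>r\<bar> * N" using uN uvN by (intro add_mono mult_left_mono) auto
    finally show ?thesis by (simp add: algebra_simps)
  qed
  have inner: "\<bar>b * u * (p * u+q *  v) + c *  v * (q * u+r *  v)\<bar> \<le> G * N"
  proof -
    have "\<bar>b * u * (p * u+q *  v) + c *  v * (q * u+r *  v)\<bar> \<le> b * \<bar>u * (p * u+q *  v)\<bar> + c * \<bar>v * (q * u+r *  v)\<bar>"
      by (rule order_trans[OF abs_triangle_ineq]) (simp add: abs_mult abs_of_nonneg b c mult.assoc)
    also have "\<dots> \<le> b * ((\<bar>p\<bar>+\<bar>q\<bar>) * N) + c * ((\<bar>q\<bar>+\<bar>r\<bar>) * N)"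
      using t1 t2 b c by (intro add_mono mult_left_mono) auto
    finally show ?thesis unfolding Gdef by (simp add: algebra_simps)
  qed
  have ub: "\<bar>u\<bar> < R0" "\<bar>v\<bar> < R0"
  proof -
    have "u^2 < R0^2" "v^2 < R0^2" using uv by (smt (verit) zero_le_power2)+
    then show "\<bar>u\<bar> < R0" "\<bar>v\<bar> < R0" using R0pos
      by (simp_all add: power2_less_imp_less abs_less_iff)
  qed
  have w: "\<bar>u+v\<bar> \<le> 2 * R0" using ub by simp
  have "R \<le> \<bar>R\<bar>" by simp
  also have "\<bar>R\<bar> = 2 * \<bar>u+v\<bar> * \<bar>b * u * (p * u+q *  v) + c *  v * (q * u+r *  v)\<bar>" unfolding R_def abs_minus_cancel abs_mult by simp
  also have "\<dots> \<le> 2 * (2 * R0) * (G * N)" using w inner G0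
    by (intro mult_mono) (auto simp: N_def)
  also have "\<dots> \<le> 2 * K * N"
  proof -
    have "R0  *  (2 * G) \<le> K" unfolding R0def K_def[symmetric] D_def[symmetric]
      using K0 G0 by (simp add: field_simps)
    moreover have "N \<ge> 0" unfolding N_def by simp
    ultimately show ?thesis by (metis mult_right_mono mult.assoc mult.commute mult.left_commute mult_le_cancel_left_pos zero_less_numeral) 
  qed
  finally have "R \<le> 2 * K * N" .
  then show ?thesis using split by simp
qed
theorem lemma2:
  fixes bH bL gH gL qHL qLH \<alpha> zS iH iL :: real
  assumes "bH > 0" "bL > 0" "gH > 0" "gL > 0"
    and "bH / gH > bL / gL" and "bH > bL"
    and "qHL \<ge> 0" "qLH \<ge> 0"
    and "0 < \<alpha>" "\<alpha> < 1"
    and "0 \<le> zS" "zS \<le> 1"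
    and "0 < iH" "iH < 1" "0 < iL" "iL < 1"
    and "bivirus_field bH bL gH gL qHL qLH \<alpha> zS (iH, iL) = (0, 0)"
  shows "locally_stable (bivirus_field bH bL gH gL qHL qLH \<alpha> zS) (iH, iL)"
proof -
  define F where "F = bivirus_field bH bL gH gL qHL qLH \<alpha> zS"
  define k where "k = \<alpha> * zS + 1 - zS"
  have "k - \<alpha> = (1-zS) * (1-\<alpha>)" unfolding k_def by (simp add: algebra_simps)
  moreover have "(1-zS) * (1-\<alpha>) \<ge> 0" using assms(10,12) by simp
  ultimately have k0: "k > 0" using assms(9) by linarith
  define b where "b = bH * k"
  define c where "c = bL * k"
  have b0: "b > 0" and c0: "c > 0" and bc: "c < b" unfolding b_def c_def using k0 assms(1,2,6) by simp_all
  have Fdef: "F (x, y) = (b * x * (1-x-y) + qLH * y - (qHL+gH) * x, c * y * (1-x-y) + qHL * x - (qLH+gL) * y)" for x y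
    unfolding F_def bivirus_field_def b_def c_def k_def Let_def by simp
  have E1: "b * iH * (1-iH-iL) + qLH * iL - (qHL+gH) * iH = 0"
    and E2: "c * iL * (1-iH-iL) + qHL * iH - (qLH+gL) * iL = 0"
    using assms(17) Fdef[of iH iL] unfolding F_def by simp_all
  have hp: "iH > 0" "iL > 0" using assms(13,15) by auto
  define X1 where "X1 = b * (1-iH-iL) - qHL - gH"
  define X2 where "X2 = c * (1-iH-iL) - qLH - gL"
  have X1e: "X1 = -qLH * iL/iH"
  proof -
    have "X1 * iH = -qLH * iL" using E1 unfolding X1_def by (simp add: algebra_simps)
    then show ?thesis using hp by (simp add: field_simps)
  qed
  have X2e: "X2 = -qHL * iH/iL"
  proof -
    have "X2 * iL = -qHL * iH" using E2 unfolding X2_def by (simp add: algebra_simps)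
    then show ?thesis using hp by (simp add: field_simps)
  qed
  define a11 where "a11 = -qLH * iL/iH - b * iH"
  define a12 where "a12 = qLH - b * iH"
  define a21 where "a21 = qHL - c * iL"
  define a22 where "a22 = -qHL * iH/iL - c * iL"
  have f1: "fst (F (iH+u, iL+v)) = a11 * u + a12 *  v - b * u * (u+v)" for u v
  proof -
    have "fst (F (iH+u, iL+v)) = (b * iH * (1-iH-iL) + qLH * iL - (qHL+gH) * iH) + X1 * u + qLH *  v - b * iH * (u+v) - b * u * (u+v)"
      unfolding Fdef X1_def by (simp add: algebra_simps)
    then show ?thesis using E1 unfolding X1e a11_def a12_def by (simp add: algebra_simps)
  qed
  have f2: "snd (F (iH+u, iL+v)) = a21 * u + a22 *  v - c *  v * (u+v)" for u v
  proof -
    have "snd (F (iH+u, iL+v)) = (c * iL * (1-iH-iL) + qHL * iH - (qLH+gL) * iL) + X2 *  v + qHL * u - c * iL * (u+v) - c *  v * (u+v)"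
      unfolding Fdef X2_def by (simp add: algebra_simps)
    then show ?thesis using E2 unfolding X2e a21_def a22_def by (simp add: algebra_simps)
  qed
  have mut: "qLH > 0 \<or> qHL > 0"
  proof (rule ccontr)
    assume "\<not> ?thesis"
    then have z: "qLH = 0" "qHL = 0" using assms(7,8) by auto
    have "(b * (1-iH-iL) - gH) * iH = b * iH * (1-iH-iL) + qLH * iL - (qHL+gH) * iH" by (simp add: z algebra_simps)
    also have "... = 0" by (rule E1)
    finally have e1: "b * (1-iH-iL) = gH" using hp by simp
    have "(c * (1-iH-iL) - gL) * iL = c * iL * (1-iH-iL) + qHL * iH - (qLH+gL) * iL" by (simp add: z algebra_simps)
    also have "... = 0" by (rule E2)
    finally have e2: "c * (1-iH-iL) = gL" using hp by simp
    have "bH * gL = bH * (bL * k * (1-iH-iL))" using e2 unfolding c_def by simp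
    also have "... = bL * (bH * k * (1-iH-iL))" by (simp add: algebra_simps)
    also have "... = bL * gH" using e1 unfolding b_def by simp
    finally have "bH * gL = bL * gH" .
    moreover have "bL * gH < bH * gL" using assms(5,3,4) by (simp add: field_simps)
    ultimately show False by simp
  qed
  have Dform: "a11 * a22 - a12 * a21 = qLH * c * iL * (iL/iH+1) + b * qHL * iH * (iH/iL+1)"
    unfolding a11_def a12_def a21_def a22_def using hp by (simp add: field_simps)
  have D0: "a11 * a22 - a12 * a21 > 0"
  proof -
    have t1: "qLH * c * iL * (iL/iH+1) \<ge> 0" "b * qHL * iH * (iH/iL+1) \<ge> 0"
      using hp b0 c0 assms(7,8) by simp_all
    have "qLH * c * iL * (iL/iH+1) > 0 \<or> b * qHL * iH * (iH/iL+1) > 0"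
      using mut hp b0 c0 by (auto intro!: mult_pos_pos add_pos_pos)
    then show ?thesis unfolding Dform using t1 by linarith
  qed
  have tr: "a11 + a22 < 0"
  proof -
    have "qLH * iL/iH \<ge> 0" "qHL * iH/iL \<ge> 0" using hp assms(7,8) by simp_all
    moreover have "b * iH > 0" "c * iL > 0" using hp b0 c0 by simp_all
    ultimately show ?thesis unfolding a11_def a22_def by linarith
  qed
  define p where "p = a11 * a22 - a12 * a21 + a21^2 + a22^2"
  define q where "q = -(a11 * a21 + a12 * a22)"
  define r where "r = a11 * a22 - a12 * a21 + a11^2 + a12^2"
  define G where "G = b * (\<bar>p\<bar>+\<bar>q\<bar>) + c * (\<bar>q\<bar>+\<bar>r\<bar>)"
  define R0 where "R0 = -(a11+a22) * (a11 * a22 - a12 * a21)/(2 * G+1)"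
  have G0: "G \<ge> 0" unfolding G_def using b0 c0 by simp
  have "locally_stable F (iH, iL)"
  proof (rule quad_lyap_stable[of p r q R0])
    show "p > 0" using quad_pos(1)[OF D0] p_def by simp
    show "p * r - q^2 > 0" using quad_pos(2)[OF D0] unfolding p_def q_def r_def .
    have "-(a11+a22) * (a11 * a22 - a12 * a21) > 0" using tr D0 by (simp add: mult_pos_pos)
    then show "R0 > 0" unfolding R0_def using G0 by simp
    fix u v assume uv: "u^2+v^2 < R0^2"
    show "2 * (p * u+q * v) * fst(F(iH+u,iL+v)) + 2 * (q * u+r * v) * snd(F(iH+u,iL+v)) \<le> 0"
      unfolding f1 f2 using b0 c0
      by (intro quad_decr[OF D0 tr _ _ p_def q_def r_def G_def R0_def uv]) simp_all
  qed
  then show ?thesis unfolding F_def .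
qed
end
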